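(* Let $(x_n)_{n\ge1}$ be a sequence of real numbers such that $x_{n+1}-x_n\ge\frac{c\log n}{n}$ for some constant $c>0$. Suppose that for some $\varepsilon_0>0$, $$\mathrm{cov}\big(X_N-X_N,\gamma_N\big)\ll N,\qquad \gamma_N=\frac{1}{N(\log N)^{1+\varepsilon_0}}.$$ Then for every $\varepsilon>0$ and almost every $\alpha\in\mathbb{R}$, $$\delta_{\min}^{\alpha}(N)\gg\frac{1}{N(\log N)^{1+\varepsilon}},$$ with implied constant depending on $\alpha,\varepsilon$.
   Context: $X_N=\{x_1,\dots,x_N\}$ and $X_N-X_N=\{a-b : a,b\in X_N\}$. For $A\subset\mathbb{R}$ and $\gamma>0$, the covering number is $\mathrm{cov}(A,\gamma)=\inf\{|B| : B\subset\mathbb{R},\ \forall a\in A\ \exists b\in B,\ |a-b|<\gamma\}$. For $x\in\mathbb{R}$, $\|x\|=\min_{k\in\mathbb{Z}}|x-k|$, and $\delta_{\min}^{\alpha}(N)=\min\{\|\alpha x_m-\alpha x_n\| : 1\le m,n\le N,\ m\ne n\}$. *)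

theory Defs
  imports "HOL-Analysis.Analysis"
begin

text \<open>Only finite B are considered
  (for finite A, as in the application, this does not change the infimum).\<close>
definition cov :: "real set \<Rightarrow> real \<Rightarrow> nat" where
  "cov A \<gamma> = Inf {card B | B. finite B \<and> (\<forall>a\<in>A. \<exists>b\<in>B. \<bar>a - b\<bar> < \<gamma>)}"

definition dist_int :: "real \<Rightarrow> real" where
  "dist_int x = Inf {\<bar>x - real_of_int k\<bar> | k. True}"

definition Xset :: "(nat \<Rightarrow> real) \<Rightarrow> nat \<Rightarrow> real set" where
  "Xset x N = x ` {1..N}"

definition diffset :: "real set \<Rightarrow> real set" where
  "diffset A = {a - b | a b. a \<in> A \<and> b \<in> A}"

text \<open>delta_min^alpha(N), for N >= 2.\<close>
definition delta_min :: "(nat \<Rightarrow> real) \<Rightarrow> real \<Rightarrow> nat \<Rightarrow> real" where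
  "delta_min x \<alpha> N = Min {dist_int (\<alpha> * x m - \<alpha> * x n) | m n.
      m \<in> {1..N} \<and> n \<in> {1..N} \<and> m \<noteq> n}"

end

theory Submission
  imports Defs
begin

lemma dist_int_bdd: "bdd_below {\<bar>y - real_of_int k\<bar> | k. True}"
  by (rule bdd_belowI[of _ 0]) auto

lemma dist_int_lt: assumes "dist_int y < \<eta>" shows "\<exists>k::int. \<bar>y - of_int k\<bar> < \<eta>"
proof -
  have ne: "{\<bar>y - real_of_int k\<bar> | k. True} \<noteq> {}" by auto
  from cInf_lessD[OF ne assms[unfolded dist_int_def]] show ?thesis by auto
qed

lemma dist_int_ge_lb: assumes "\<And>k::int. B \<le> \<bar>y - of_int k\<bar>" shows "B \<le> dist_int y"
  unfolding dist_int_def by (rule cInf_greatest) (auto intro: assms)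

lemma dist_int_small: assumes "\<bar>y\<bar> \<le> 1/2" shows "\<bar>y\<bar> \<le> dist_int y"
proof (rule dist_int_ge_lb)
  fix k :: int
  show "\<bar>y\<bar> \<le> \<bar>y - of_int k\<bar>"
  proof (cases "k = 0")
    case False
    then have "\<bar>real_of_int k\<bar> \<ge> 1" by linarith
    then show ?thesis using assms by linarith
  qed simp
qed

lemma dist_int_pos: assumes "\<And>k::int. y \<noteq> of_int k" shows "0 < dist_int y"
proof -
  have a: "y - of_int \<lfloor>y\<rfloor> > 0" using assms[of "\<lfloor>y\<rfloor>"] of_int_floor_le[of y] by linarith
  have b: "of_int \<lfloor>y\<rfloor> + 1 - y > 0" by linarith
  have "min (y - of_int \<lfloor>y\<rfloor>) (of_int \<lfloor>y\<rfloor> + 1 - y) \<le> dist_int y"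
  proof (rule dist_int_ge_lb)
    fix k :: int
    show "min (y - of_int \<lfloor>y\<rfloor>) (of_int \<lfloor>y\<rfloor> + 1 - y) \<le> \<bar>y - of_int k\<bar>"
    proof (cases "k \<le> \<lfloor>y\<rfloor>")
      case True
      then have "real_of_int k \<le> of_int \<lfloor>y\<rfloor>" by simp
      then show ?thesis by linarith
    next
      case False
      then have "real_of_int k \<ge> of_int \<lfloor>y\<rfloor> + 1" by linarith
      then show ?thesis by linarith
    qed
  qed
  then show ?thesis using a b by linarith
qed

lemma diffset_finite: "finite A \<Longrightarrow> finite (diffset A)"
proof -
  assume "finite A"
  have "diffset A = (\<lambda>(a,b). a - b) ` (A \<times> A)" unfolding diffset_def by auto
  then show ?thesis using \<open>finite A\<close> by simp
qed

lemma cov_witness: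
  assumes "finite S" "\<gamma> > 0"
  shows "\<exists>B. finite B \<and> (\<forall>a\<in>S. \<exists>b\<in>B. \<bar>a - b\<bar> < \<gamma>) \<and> card B = cov S \<gamma>"
proof -
  let ?K = "{card B | B. finite B \<and> (\<forall>a\<in>S. \<exists>b\<in>B. \<bar>a - b\<bar> < \<gamma>)}"
  have "card S \<in> ?K" using assms by force
  then have "?K \<noteq> {}" by blast
  from Inf_nat_def1[OF this] show ?thesis unfolding cov_def by auto
qed

lemma delta_min_attained:
  assumes "N \<ge> 2"
  shows "\<exists>m n. m \<in> {1..N} \<and> n \<in> {1..N} \<and> m \<noteq> n \<and> delta_min x \<alpha> N = dist_int (\<alpha> * x m - \<alpha> * x n)"
proof -
  let ?S = "{dist_int (\<alpha> * x m - \<alpha> * x n) | m n. m \<in> {1..N} \<and> n \<in> {1..N} \<and> m \<noteq> n}"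
  have "?S = (\<lambda>(m,n). dist_int (\<alpha> * x m - \<alpha> * x n)) ` {p \<in> {1..N} \<times> {1..N}. fst p \<noteq> snd p}" by force
  then have fin: "finite ?S" by simp
  have "dist_int (\<alpha> * x 1 - \<alpha> * x 2) \<in> ?S" using assms by force
  then have "?S \<noteq> {}" by blast
  from Min_in[OF fin this] show ?thesis unfolding delta_min_def by auto
qed

lemma measure_ball_real: "r \<ge> 0 \<Longrightarrow> measure lborel (ball (c::real) r) = 2 * r"
  by (simp add: ball_eq_greaterThanLessThan measure_def)

lemma emeasure_ball_real_fin: "emeasure lborel (ball (c::real) r) < \<infinity>"
  by (rule emeasure_lborel_ball_finite)

lemma fin_union_emeasure:
  assumes "finite I" "\<And>i. i \<in> I \<Longrightarrow> F i \<in> sets M" "\<And>i. i \<in> I \<Longrightarrow> emeasure M (F i) < \<infinity>"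
  shows "emeasure M (\<Union>i\<in>I. F i) < \<infinity>"
proof -
  have "emeasure M (\<Union>i\<in>I. F i) \<le> (\<Sum>i\<in>I. emeasure M (F i))"
    using assms by (intro emeasure_subadditive_finite) auto
  also have "\<dots> < \<infinity>" using assms by (simp add: sum_Pinfty less_top)
  finally show ?thesis .
qed

lemma ball_union_measure:
  fixes A \<eta> b :: real
  assumes A: "A > 0" and b: "\<bar>b\<bar> \<ge> 1/(4*A)" and eta: "\<eta> \<ge> 0"
  shows "measure lborel (\<Union>k\<in>{-(\<lceil>A*\<bar>b\<bar>\<rceil>+1)..\<lceil>A*\<bar>b\<bar>\<rceil>+1}. ball (of_int k / b) (\<eta>/\<bar>b\<bar>)) \<le> 44*A*\<eta>"
proof -
  let ?K = "\<lceil>A*\<bar>b\<bar>\<rceil>+1"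
  have bpos: "\<bar>b\<bar> > 0" using b A by (smt (verit) divide_pos_pos)
  have "measure lborel (\<Union>k\<in>{-?K..?K}. ball (of_int k / b) (\<eta>/\<bar>b\<bar>)) \<le> (\<Sum>k\<in>{-?K..?K}. measure lborel (ball (of_int k / b) (\<eta>/\<bar>b\<bar>)))"
    by (rule measure_UNION_le) auto
  also have "\<dots> = real (card {-?K..?K}) * (2 * (\<eta>/\<bar>b\<bar>))"
    using eta bpos by (simp add: measure_ball_real)
  also have "real (card {-?K..?K}) = 2 * of_int ?K + 1"
  proof -
    have "A*\<bar>b\<bar> \<ge> 0" using A by simp
    then have "?K \<ge> 1" by linarith
    then show ?thesis by (simp add: card_atLeastAtMost_int of_nat_nat)
  qed
  also have "(2 * of_int ?K + 1) * (2 * (\<eta>/\<bar>b\<bar>)) \<le> (2*A*\<bar>b\<bar> + 5) * (2 * (\<eta>/\<bar>b\<bar>))"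
    using eta bpos ceiling_correct[of "A*\<bar>b\<bar>"] by (intro mult_right_mono) simp_all
  also have "\<dots> = 4*A*\<eta> + 10*\<eta>/\<bar>b\<bar>" using bpos by (simp add: field_simps)
  also have "10*\<eta>/\<bar>b\<bar> \<le> 40*A*\<eta>"
  proof -
    have "1/\<bar>b\<bar> \<le> 4*A" using b bpos A by (simp add: field_simps)
    then have "10*\<eta>*(1/\<bar>b\<bar>) \<le> 10*\<eta>*(4*A)" using eta by (intro mult_left_mono) auto
    then show ?thesis by (simp add: mult_ac)
  qed
  finally show ?thesis by linarith
qed

lemma sep:
  fixes x :: "nat \<Rightarrow> real"
  assumes c_pos: "c > 0"
    and gap: "\<And>n. n \<ge> 1 \<Longrightarrow> x (n + 1) - x n \<ge> c * ln (real n) / real n"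
    and distinct: "inj_on x {1..}"
  shows "\<exists>g0>0. \<forall>M m n. 1 \<le> n \<longrightarrow> n < m \<longrightarrow> m \<le> M \<longrightarrow> g0 / real M \<le> x m - x n"
proof -
  have step: "x n \<le> x (n+1)" if "n \<ge> 1" for n
  proof -
    have "0 \<le> c * ln (real n) / real n" using c_pos that by simp
    then show ?thesis using gap[OF that] by linarith
  qed
  have mono: "x n \<le> x (n+k)" if "n \<ge> 1" for n k
  proof (induction k)
    case (Suc k) then show ?case using step[of "n+k"] that by simp
  qed simp
  have x12: "x 1 < x 2"
  proof -
    have "x 1 \<le> x 2" using step[of 1] by (simp add: numeral_2_eq_2)
    moreover have "x 1 \<noteq> x 2" using inj_onD[OF distinct, of 1 2] by auto
    ultimately show ?thesis by simp
  qed
  define g0 where "g0 = min (x 2 - x 1) (c * ln 2)"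
  have g0: "g0 > 0" using x12 c_pos by (simp add: g0_def)
  have "g0 / real M \<le> x m - x n" if "1 \<le> n" "n < m" "m \<le> M" for M m n
  proof -
    have M: "real M \<ge> 1" "real M \<ge> real n" using that by auto
    have "x (n+1) \<le> x m" using mono[of "n+1" "m - (n+1)"] that by simp
    moreover have "g0 / real M \<le> x (n+1) - x n"
    proof (cases "n = 1")
      case True
      have "g0 / real M \<le> g0" using g0 M by (simp add: divide_le_eq)
      also have "\<dots> \<le> x (n+1) - x n" using True by (simp add: g0_def numeral_2_eq_2)
      finally show ?thesis .
    next
      case False
      then have n2: "n \<ge> 2" using that by simp
      have "g0 / real M \<le> c * ln 2 / real M" using M by (intro divide_right_mono) (auto simp: g0_def)
      also have "\<dots> \<le> c * ln 2 / real n" using M n2 c_pos by (intro divide_left_mono) auto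
      also have "\<dots> \<le> c * ln (real n) / real n" using n2 c_pos by (intro divide_right_mono mult_left_mono) auto
      also have "\<dots> \<le> x (n+1) - x n" using gap that by simp
      finally show ?thesis .
    qed
    ultimately show ?thesis by linarith
  qed
  then show ?thesis using g0 by blast
qed

lemma summable_L:
  fixes p :: real assumes "p > 1"
  shows "summable (\<lambda>j::nat. ln (real ((2::nat)^Suc j)) powr (-p))"
proof -
  have eq: "ln (real ((2::nat)^Suc j)) powr (-p) = ln 2 powr (-p) * real (Suc j) powr (-p)" for j
  proof -
    have "ln (real ((2::nat)^Suc j)) = ln ((2::real)^Suc j)" by simp
    also have "\<dots> = real (Suc j) * ln 2" by (rule ln_realpow)
    finally have "ln (real ((2::nat)^Suc j)) = real (Suc j) * ln 2" .
    then show ?thesis by (simp add: powr_mult)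
  qed
  have "summable (\<lambda>n. real n powr (-p))" using assms by (simp add: summable_real_powr_iff)
  then have "summable (\<lambda>j. real (Suc j) powr (-p))" by (subst summable_Suc_iff)
  then show ?thesis unfolding eq by (rule summable_mult)
qed

lemma core:
  fixes x :: "nat \<Rightarrow> real" and A e \<epsilon> \<epsilon>0 g0 Cc :: real
  assumes A: "A \<ge> 1" and e: "0 < e" "e \<le> \<epsilon>" "e \<le> \<epsilon>0"
   and g0: "g0 > 0" and sepx: "\<forall>M m n. 1 \<le> n \<longrightarrow> n < m \<longrightarrow> m \<le> M \<longrightarrow> g0 / real M \<le> x m - x n"
   and Cc: "Cc > 0"
   and covb: "\<forall>N\<ge>2. real (cov (diffset (Xset x N)) (1/(real N * ln (real N) powr (1+\<epsilon>0)))) \<le> Cc * real N"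
  shows "AE \<alpha> in lborel. \<bar>\<alpha>\<bar> \<le> A \<longrightarrow> 1/A \<le> \<bar>\<alpha>\<bar> \<longrightarrow>
     (\<forall>m n k. 1 \<le> m \<longrightarrow> 1 \<le> n \<longrightarrow> m \<noteq> n \<longrightarrow> \<alpha>*(x m - x n) \<noteq> of_int k) \<longrightarrow>
     (\<exists>C>0. \<forall>N\<ge>2. C/(real N * ln (real N) powr (1+\<epsilon>)) \<le> delta_min x \<alpha> N)"
proof -
  define M where "M j = (2::nat)^Suc j" for j
  define L where "L j = ln (real (M j))" for j
  define \<gamma> where "\<gamma> j = 1/(real (M j) * L j powr (1+\<epsilon>0))" for j
  define \<delta> where "\<delta> j = 1/(real (M j) * L j powr (1+e))" for j
  define \<eta> where "\<eta> j = \<delta> j + A * \<gamma> j" for j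
  define t where "t = 1/(2*A)"
  have Apos: "A > 0" using A by simp
  have tpos: "t > 0" using Apos by (simp add: t_def)
  have M2: "real (M j) \<ge> 2" for j
  proof -
    have "(2::nat) \<le> 2^Suc j" by simp
    then show ?thesis unfolding M_def by linarith
  qed
  have Lge: "L j \<ge> ln 2" for j using M2[of j] by (simp add: L_def)
  have ln2: "ln (2::real) > 0" by simp
  have Lpos: "L j > 0" for j using Lge[of j] ln2 by linarith
  have gpos: "\<gamma> j > 0" for j using M2[of j] Lpos[of j] by (simp add: \<gamma>_def)
  have dpos: "\<delta> j > 0" for j using M2[of j] Lpos[of j] by (simp add: \<delta>_def)
  have epos: "\<eta> j > 0" for j using gpos[of j] dpos[of j] Apos unfolding \<eta>_def by (intro add_pos_pos mult_pos_pos)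
  obtain B where B: "\<And>j. finite (B j)" "\<And>j. \<forall>a\<in>diffset (Xset x (M j)). \<exists>b\<in>B j. \<bar>a - b\<bar> < \<gamma> j"
      "\<And>j. real (card (B j)) \<le> Cc * real (M j)"
  proof -
    have "\<forall>j. \<exists>B. finite B \<and> (\<forall>a\<in>diffset (Xset x (M j)). \<exists>b\<in>B. \<bar>a - b\<bar> < \<gamma> j) \<and> real (card B) \<le> Cc * real (M j)"
    proof
      fix j
      have fin: "finite (diffset (Xset x (M j)))" by (simp add: Xset_def diffset_finite)
      obtain B where "finite B" "\<forall>a\<in>diffset (Xset x (M j)). \<exists>b\<in>B. \<bar>a - b\<bar> < \<gamma> j" "card B = cov (diffset (Xset x (M j))) (\<gamma> j)"
        using cov_witness[OF fin gpos[of j]] by blast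
      moreover have "real (cov (diffset (Xset x (M j))) (\<gamma> j)) \<le> Cc * real (M j)"
        using covb M2[of j] unfolding \<gamma>_def L_def by simp
      ultimately show "\<exists>B. finite B \<and> (\<forall>a\<in>diffset (Xset x (M j)). \<exists>b\<in>B. \<bar>a - b\<bar> < \<gamma> j) \<and> real (card B) \<le> Cc * real (M j)"
        by auto
    qed
    then obtain B where "\<forall>j. finite (B j) \<and> (\<forall>a\<in>diffset (Xset x (M j)). \<exists>b\<in>B j. \<bar>a - b\<bar> < \<gamma> j) \<and> real (card (B j)) \<le> Cc * real (M j)"
      by (subst (asm) choice_iff) blast
    then show ?thesis using that by blast
  qed
  define K where "K (b::real) = \<lceil>A*\<bar>b\<bar>\<rceil>+1" for b
  define H where "H j (b::real) = (\<Union>k\<in>{-K b..K b}. ball (of_int k / b) (\<eta> j / \<bar>b\<bar>))" for j b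
  define G where "G j = (\<Union>b\<in>{b\<in>B j. \<bar>b\<bar> \<ge> t/2}. H j b)" for j
  have Hsets: "H j b \<in> sets lborel" for j b unfolding H_def by (auto intro!: borel_open)
  have Gsets: "G j \<in> sets lborel" for j unfolding G_def H_def by (auto intro!: borel_open)
  have Hfin: "emeasure lborel (H j b) < \<infinity>" for j b
    unfolding H_def by (rule fin_union_emeasure) (auto simp: emeasure_lborel_ball_finite[unfolded infinity_ennreal_def])
  have Gfin: "emeasure lborel (G j) < \<infinity>" for j
    unfolding G_def using B(1)[of j] Hsets Hfin by (intro fin_union_emeasure) auto
  have Gmeas: "measure lborel (G j) \<le> Cc * real (M j) * (44*A*\<eta> j)" for j
  proof -
    have "measure lborel (G j) \<le> (\<Sum>b\<in>{b\<in>B j. \<bar>b\<bar> \<ge> t/2}. measure lborel (H j b))"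
      unfolding G_def using B(1)[of j] Hsets by (intro measure_UNION_le) auto
    also have "\<dots> \<le> (\<Sum>b\<in>{b\<in>B j. \<bar>b\<bar> \<ge> t/2}. 44*A*\<eta> j)"
    proof (rule sum_mono)
      fix b assume "b \<in> {b\<in>B j. \<bar>b\<bar> \<ge> t/2}"
      then have "\<bar>b\<bar> \<ge> 1/(4*A)" by (simp add: t_def)
      then show "measure lborel (H j b) \<le> 44*A*\<eta> j"
        unfolding H_def K_def using ball_union_measure[OF Apos _ less_imp_le[OF epos[of j]]] by blast
    qed
    also have "\<dots> = real (card {b\<in>B j. \<bar>b\<bar> \<ge> t/2}) * (44*A*\<eta> j)" by simp
    also have "\<dots> \<le> real (card (B j)) * (44*A*\<eta> j)"
      using B(1)[of j] epos[of j] Apos by (intro mult_right_mono) (auto intro!: card_mono)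
    also have "\<dots> \<le> Cc * real (M j) * (44*A*\<eta> j)"
      using B(3)[of j] epos[of j] Apos by (intro mult_right_mono) auto
    finally show ?thesis .
  qed
  have Meta: "real (M j) * \<eta> j = L j powr (-(1+e)) + A * L j powr (-(1+\<epsilon>0))" for j
  proof -
    have p1: "L j powr (-(1+e)) = 1 / L j powr (1+e)" by (rule powr_minus_divide)
    have p2: "L j powr (-(1+\<epsilon>0)) = 1 / L j powr (1+\<epsilon>0)" by (rule powr_minus_divide)
    have "L j powr (1+e) > 0" "L j powr (1+\<epsilon>0) > 0" using Lpos[of j] by auto
    then show ?thesis unfolding p1 p2 \<eta>_def \<delta>_def \<gamma>_def using M2[of j] by (simp add: field_simps)
  qed
  have summ: "summable (\<lambda>j. measure lborel (G j))"
  proof (rule summable_comparison_test')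
    have s1: "summable (\<lambda>j. L j powr (-(1+e)))" unfolding L_def M_def using e by (intro summable_L) simp
    have s2: "summable (\<lambda>j. L j powr (-(1+\<epsilon>0)))" unfolding L_def M_def using e by (intro summable_L) simp
    have "summable (\<lambda>j. 44*A*Cc * L j powr (-(1+e)) + 44*A*Cc*A * L j powr (-(1+\<epsilon>0)))"
      using s1 s2 by (intro summable_add summable_mult)
    moreover have "44*A*Cc * L j powr (-(1+e)) + 44*A*Cc*A * L j powr (-(1+\<epsilon>0)) = Cc * real (M j) * (44*A*\<eta> j)" for j
    proof -
      have "Cc * real (M j) * (44*A*\<eta> j) = 44*A*Cc * (real (M j) * \<eta> j)" by (simp add: mult_ac)
      also have "\<dots> = 44*A*Cc * L j powr (-(1+e)) + 44*A*Cc*A * L j powr (-(1+\<epsilon>0))"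
        unfolding Meta by (simp add: algebra_simps)
      finally show ?thesis by simp
    qed
    ultimately show "summable (\<lambda>j. Cc * real (M j) * (44*A*\<eta> j))" by simp
    show "norm (measure lborel (G j)) \<le> Cc * real (M j) * (44*A*\<eta> j)" for j
      using Gmeas[of j] by simp
  qed
  have BC: "AE \<alpha> in lborel. eventually (\<lambda>j. \<alpha> \<in> space lborel - G j) sequentially"
    by (rule borel_cantelli_AE1[OF Gsets Gfin summ])
  show ?thesis
    using BC
  proof (rule eventually_mono)
    fix \<alpha> assume ev: "eventually (\<lambda>j. \<alpha> \<in> space lborel - G j) sequentially"
    show "\<bar>\<alpha>\<bar> \<le> A \<longrightarrow> 1/A \<le> \<bar>\<alpha>\<bar> \<longrightarrow>
     (\<forall>m n k. 1 \<le> m \<longrightarrow> 1 \<le> n \<longrightarrow> m \<noteq> n \<longrightarrow> \<alpha>*(x m - x n) \<noteq> of_int k) \<longrightarrow>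
     (\<exists>C>0. \<forall>N\<ge>2. C/(real N * ln (real N) powr (1+\<epsilon>)) \<le> delta_min x \<alpha> N)"
    proof (intro impI)
      assume hA: "\<bar>\<alpha>\<bar> \<le> A" and hA2: "1/A \<le> \<bar>\<alpha>\<bar>"
        and nonint: "\<forall>m n k. 1 \<le> m \<longrightarrow> 1 \<le> n \<longrightarrow> m \<noteq> n \<longrightarrow> \<alpha>*(x m - x n) \<noteq> of_int k"
      obtain J0 where J0: "\<And>j. j \<ge> J0 \<Longrightarrow> \<alpha> \<notin> G j"
        using ev unfolding eventually_sequentially by auto
      obtain n0 :: nat where n0: "4*A+1 < real n0" using reals_Archimedean2 by blast
      define J where "J = max J0 (Suc n0)"
      have J1: "J \<ge> 1" by (simp add: J_def)
      have MJ: "real (M j) \<ge> 4*A+1" if "j \<ge> J" for j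
      proof -
        have "n0 < 2^n0" by (rule less_exp)
        also have "(2::nat)^n0 \<le> 2^Suc j" using that by (intro power_increasing) (auto simp: J_def)
        finally have "real n0 < real (M j)" unfolding M_def by linarith
        then show ?thesis using n0 by linarith
      qed
      have L1: "L j \<ge> 1" if "j \<ge> 1" for j
      proof -
        have "(4::nat) \<le> 2^Suc j"
        proof -
          have "(2::nat)^2 \<le> 2^Suc j" using that by (intro power_increasing) auto
          then show ?thesis by simp
        qed
        then have "real (M j) \<ge> 4" unfolding M_def by linarith
        moreover have "exp 1 \<le> (4::real)" using exp_le by linarith
        ultimately show ?thesis unfolding L_def using ln_ge_iff[of "real (M j)" 1] by simp
      qed
      have small: "\<gamma> j \<le> 1/real (M j)" "\<delta> j \<le> 1/real (M j)" if "j \<ge> 1" for j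
      proof -
        have "L j powr (1+\<epsilon>0) \<ge> 1" "L j powr (1+e) \<ge> 1"
          using L1[OF that] e by (auto intro!: ge_one_powr_ge_zero)
        then show "\<gamma> j \<le> 1/real (M j)" "\<delta> j \<le> 1/real (M j)"
          unfolding \<gamma>_def \<delta>_def using M2[of j] by (auto intro!: divide_left_mono mult_pos_pos simp: mult_le_cancel_left1)
      qed
      have gam_t: "\<gamma> j \<le> t/2" and eta1: "\<eta> j \<le> 1" if "j \<ge> J" for j
      proof -
        have j1: "j \<ge> 1" using that J1 by linarith
        have inv: "1/real (M j) \<le> 1/(4*A+1)" using MJ[OF that] Apos by (intro divide_left_mono) auto
        have "1/(4*A+1) \<le> 1/(4*A)" using Apos by (intro divide_left_mono) auto
        then show "\<gamma> j \<le> t/2" using small(1)[OF j1] inv by (simp add: t_def)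
        have "\<eta> j \<le> 1/real (M j) + A * (1/real (M j))"
          unfolding \<eta>_def using small[OF j1] Apos by (intro add_mono mult_left_mono) auto
        also have "\<dots> = (1+A) * (1/real (M j))" by (simp add: algebra_simps add_divide_distrib)
        also have "\<dots> \<le> (1+A) * (1/(4*A+1))" using inv Apos by (intro mult_left_mono) auto
        also have "\<dots> \<le> 1" using Apos by (simp add: field_simps)
        finally show "\<eta> j \<le> 1" .
      qed
      have inG: "\<alpha> \<in> G j"
        if j: "j \<ge> J" and mn: "m \<in> {1..M j}" "n \<in> {1..M j}" and dt: "\<bar>x m - x n\<bar> \<ge> t"
          and dl: "dist_int (\<alpha> * (x m - x n)) < \<delta> j" for j m n
      proof -
        define d where "d = x m - x n"
        have "x m \<in> Xset x (M j)" "x n \<in> Xset x (M j)" using mn unfolding Xset_def by auto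
        then have "d \<in> diffset (Xset x (M j))" unfolding d_def diffset_def by blast
        then obtain b where b: "b \<in> B j" "\<bar>d - b\<bar> < \<gamma> j" using B(2)[of j] by blast
        have bt: "\<bar>b\<bar> \<ge> t/2" using gam_t[OF j] b(2) dt unfolding d_def by linarith
        have bpos: "\<bar>b\<bar> > 0" using bt tpos by linarith
        obtain k :: int where k: "\<bar>\<alpha> * d - of_int k\<bar> < \<delta> j" using dist_int_lt dl unfolding d_def by blast
        have "\<bar>\<alpha>\<bar> * \<bar>b - d\<bar> \<le> A * \<gamma> j" using hA b(2) by (intro mult_mono) auto
        then have "\<bar>\<alpha> * b - \<alpha> * d\<bar> \<le> A * \<gamma> j" by (simp add: abs_mult[symmetric] algebra_simps)
        then have kb: "\<bar>\<alpha> * b - of_int k\<bar> < \<eta> j" using k unfolding \<eta>_def by linarith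
        have "\<bar>\<alpha> * b\<bar> \<le> A * \<bar>b\<bar>" using hA by (simp add: abs_mult mult_right_mono)
        then have "\<bar>of_int k\<bar> \<le> A * \<bar>b\<bar> + 1" using kb eta1[OF j] by linarith
        then have kK: "k \<in> {-K b..K b}" unfolding K_def
          using ceiling_correct[of "A*\<bar>b\<bar>"] by (simp, linarith)
        have "dist \<alpha> (of_int k / b) = \<bar>\<alpha> * b - of_int k\<bar> / \<bar>b\<bar>"
        proof -
          have "\<alpha> - of_int k / b = (\<alpha> * b - of_int k) / b" using bpos by (simp add: field_simps)
          then show ?thesis by (simp add: dist_real_def abs_minus_commute)
        qed
        also have "\<dots> < \<eta> j / \<bar>b\<bar>" using kb bpos by (simp add: divide_strict_right_mono)
        finally have "\<alpha> \<in> ball (of_int k / b) (\<eta> j / \<bar>b\<bar>)" by (simp add: dist_commute)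
        then show ?thesis unfolding G_def H_def using kK b(1) bt by blast
      qed
      define C1 where "C1 = min 1 (g0/A * ln 2 powr (1+e))"
      have C1pos: "C1 > 0" using g0 Apos by (simp add: C1_def)
      have main: "C1/(real (M j) * L j powr (1+e)) \<le> dist_int (\<alpha> * x m - \<alpha> * x n)"
        if j: "j \<ge> J" and mn: "m \<in> {1..M j}" "n \<in> {1..M j}" "m \<noteq> n" for j m n
      proof -
        define d where "d = x m - x n"
        have eqd: "\<alpha> * x m - \<alpha> * x n = \<alpha> * d" by (simp add: d_def algebra_simps)
        have Pp: "L j powr (1+e) > 0" using Lpos[of j] by simp
        have dge: "\<bar>d\<bar> \<ge> g0 / real (M j)"
        proof (cases "n < m")
          case True then show ?thesis using sepx mn unfolding d_def by force
        next
          case False then have "m < n" using mn by simp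
          then have "g0 / real (M j) \<le> x n - x m" using sepx mn by force
          then show ?thesis unfolding d_def by linarith
        qed
        show ?thesis
        proof (cases "\<bar>d\<bar> < t")
          case True
          have "\<bar>\<alpha> * d\<bar> \<le> A * t" using hA True by (simp add: abs_mult mult_mono)
          also have "A * t = 1/2" using Apos by (simp add: t_def)
          finally have "\<bar>\<alpha> * d\<bar> \<le> dist_int (\<alpha> * d)" by (rule dist_int_small)
          moreover have "(1/A) * (g0 / real (M j)) \<le> \<bar>\<alpha> * d\<bar>"
            unfolding abs_mult using hA2 dge Apos g0 M2[of j] by (intro mult_mono) auto
          moreover have "C1/(real (M j) * L j powr (1+e)) \<le> (1/A) * (g0 / real (M j))"
          proof -
            have "ln 2 powr (1+e) \<le> L j powr (1+e)" using Lge[of j] e by (intro powr_mono2) auto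
            then have "C1 \<le> g0/A * L j powr (1+e)"
              unfolding C1_def using g0 Apos by (smt (verit) divide_pos_pos mult_left_mono)
            then have "C1 / L j powr (1+e) \<le> g0/A" using Pp by (simp add: divide_le_eq)
            then have "C1 / L j powr (1+e) / real (M j) \<le> g0/A / real (M j)"
              using M2[of j] by (intro divide_right_mono) auto
            then show ?thesis by (simp add: field_simps)
          qed
          ultimately show ?thesis unfolding eqd by linarith
        next
          case False
          show ?thesis
          proof (rule ccontr)
            assume "\<not> ?thesis"
            then have lt: "dist_int (\<alpha> * d) < C1/(real (M j) * L j powr (1+e))" unfolding eqd by simp
            have "C1/(real (M j) * L j powr (1+e)) \<le> \<delta> j"
              unfolding \<delta>_def using C1pos M2[of j] Pp by (intro divide_right_mono) (auto simp: C1_def)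
            then have "\<alpha> \<in> G j" using inG[OF j mn(1,2)] False lt unfolding d_def by linarith
            then show False using J0 j by (auto simp: J_def)
          qed
        qed
      qed
      show "\<exists>C>0. \<forall>N\<ge>2. C/(real N * ln (real N) powr (1+\<epsilon>)) \<le> delta_min x \<alpha> N"
      proof -
        define N1 where "N1 = (2::nat)^Suc J"
        define f where "f N = delta_min x \<alpha> N * (real N * ln (real N) powr (1+\<epsilon>))" for N
        have fpos: "f N > 0" if N2: "N \<ge> 2" for N
        proof -
          obtain m n where mn: "m \<in> {1..N}" "n \<in> {1..N}" "m \<noteq> n"
            and eq: "delta_min x \<alpha> N = dist_int (\<alpha> * x m - \<alpha> * x n)"
            using delta_min_attained[OF N2] by blast
          have "\<And>k. \<alpha> * x m - \<alpha> * x n \<noteq> of_int k"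
            using nonint mn by (metis atLeastAtMost_iff right_diff_distrib)
          then have "delta_min x \<alpha> N > 0" unfolding eq by (rule dist_int_pos)
          moreover have "ln (real N) > 0" using that by simp
          ultimately show ?thesis using that by (simp add: f_def)
        qed
        define C2 where "C2 = Min (f ` {2..N1})"
        have N1ge: "N1 \<ge> 2" by (simp add: N1_def)
        have C2pos: "C2 > 0" unfolding C2_def using fpos N1ge by (subst Min_gr_iff) auto
        define C3 where "C3 = C1 / (2 * 2 powr (1+e))"
        have C3pos: "C3 > 0" using C1pos by (simp add: C3_def)
        define C where "C = min C2 C3"
        have "C/(real N * ln (real N) powr (1+\<epsilon>)) \<le> delta_min x \<alpha> N" if N: "N \<ge> 2" for N
        proof -
          have Q: "real N * ln (real N) powr (1+\<epsilon>) > 0" using N by simp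
          show ?thesis
          proof (cases "N \<le> N1")
            case True
            have "C \<le> f N" unfolding C_def C2_def using True N by (auto intro!: min.coboundedI1 Min_le)
            then show ?thesis using Q by (simp add: f_def divide_le_eq)
          next
            case False
            obtain j where j: "2^j < N" "N \<le> 2^(j+1)" using ex_power_ivl2[of 2 N] N by auto
            have "(2::nat)^Suc J < N" using False unfolding N1_def by simp
            moreover have "N \<le> (2::nat)^Suc j" using j(2) by simp
            ultimately have "(2::nat)^Suc J < 2^Suc j" by (rule less_le_trans)
            then have jJ: "j \<ge> J" using power_less_imp_less_exp[of 2 "Suc J" "Suc j"] by simp
            obtain m n where mn: "m \<in> {1..N}" "n \<in> {1..N}" "m \<noteq> n"
              and eq: "delta_min x \<alpha> N = dist_int (\<alpha> * x m - \<alpha> * x n)"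
              using delta_min_attained[OF N] by blast
            have mn': "m \<in> {1..M j}" "n \<in> {1..M j}" using mn j(2) by (auto simp: M_def)
            have b1: "C1/(real (M j) * L j powr (1+e)) \<le> delta_min x \<alpha> N"
              unfolding eq using main[OF jJ mn' mn(3)] .
            have lnN: "ln (real N) \<ge> 1"
            proof -
              have "(4::nat) \<le> 2^Suc J"
              proof -
                have "(2::nat)^2 \<le> 2^Suc J" using J1 by (intro power_increasing) auto
                then show ?thesis by simp
              qed
              then have "real N \<ge> 4" using False unfolding N1_def by linarith
              moreover have "exp 1 \<le> (4::real)" using exp_le by linarith
              ultimately show ?thesis using ln_ge_iff[of "real N" 1] by simp
            qed
            have MjN: "real (M j) \<le> 2 * real N"
            proof -
              have "M j = 2 * 2^j" by (simp add: M_def)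
              then show ?thesis using j(1) by simp
            qed
            have LjN: "L j \<le> 2 * ln (real N)"
            proof -
              have "L j \<le> ln (2 * real N)" unfolding L_def using MjN M2[of j] by simp
              also have "\<dots> = ln 2 + ln (real N)" using N by (simp add: ln_mult)
              also have "\<dots> \<le> 2 * ln (real N)" using N by simp
              finally show ?thesis .
            qed
            have "L j powr (1+e) \<le> (2 * ln (real N)) powr (1+e)"
              using LjN Lpos[of j] e by (intro powr_mono2) auto
            also have "\<dots> = 2 powr (1+e) * ln (real N) powr (1+e)" using lnN by (simp add: powr_mult)
            also have "\<dots> \<le> 2 powr (1+e) * ln (real N) powr (1+\<epsilon>)"
              using lnN e by (intro mult_left_mono powr_mono) auto
            finally have Lb: "L j powr (1+e) \<le> 2 powr (1+e) * ln (real N) powr (1+\<epsilon>)" .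
            have "real (M j) * L j powr (1+e) \<le> (2 * real N) * (2 powr (1+e) * ln (real N) powr (1+\<epsilon>))"
              using MjN Lb Lpos[of j] by (intro mult_mono) auto
            also have "\<dots> = (2 * 2 powr (1+e)) * (real N * ln (real N) powr (1+\<epsilon>))" by (simp add: mult_ac)
            finally have prod: "real (M j) * L j powr (1+e) \<le> (2 * 2 powr (1+e)) * (real N * ln (real N) powr (1+\<epsilon>))" .
            have "C/(real N * ln (real N) powr (1+\<epsilon>)) \<le> C3/(real N * ln (real N) powr (1+\<epsilon>))"
              using Q by (intro divide_right_mono) (auto simp: C_def)
            also have "\<dots> = C1 / ((2 * 2 powr (1+e)) * (real N * ln (real N) powr (1+\<epsilon>)))"
              by (simp add: C3_def)
            also have "\<dots> \<le> C1/(real (M j) * L j powr (1+e))"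
              using prod C1pos M2[of j] Lpos[of j] N by (intro divide_left_mono mult_pos_pos) auto
            also have "\<dots> \<le> delta_min x \<alpha> N" by (rule b1)
            finally show ?thesis .
          qed
        qed
        moreover have "C > 0" using C2pos C3pos by (simp add: C_def)
        ultimately show ?thesis by blast
      qed
    qed
  qed
qed
theorem theorem10:
  fixes x :: "nat \<Rightarrow> real" and c \<epsilon>0 :: real
  assumes c_pos: "c > 0"
    and gap: "\<And>n. n \<ge> 1 \<Longrightarrow> x (n + 1) - x n \<ge> c * ln (real n) / real n"
    and distinct: "inj_on x {1..}"
    and eps0_pos: "\<epsilon>0 > 0"
    and cov_bound: "\<exists>C>0. \<forall>N\<ge>2. real (cov (diffset (Xset x N))
                      (1 / (real N * ln (real N) powr (1 + \<epsilon>0)))) \<le> C * real N"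
  shows "\<forall>\<epsilon>>0. AE \<alpha> in lborel. \<exists>C>0. \<forall>N\<ge>2.
           delta_min x \<alpha> N \<ge> C / (real N * ln (real N) powr (1 + \<epsilon>))"
proof (intro allI impI)
  fix \<epsilon> :: real assume \<epsilon>: "\<epsilon> > 0"
  obtain g0 where g0: "g0 > 0" and sepx: "\<forall>M m n. 1 \<le> n \<longrightarrow> n < m \<longrightarrow> m \<le> M \<longrightarrow> g0 / real M \<le> x m - x n"
    using sep[OF c_pos gap distinct] by blast
  obtain Cc where Cc: "Cc > 0" and covb: "\<forall>N\<ge>2. real (cov (diffset (Xset x N)) (1/(real N * ln (real N) powr (1+\<epsilon>0)))) \<le> Cc * real N"
    using cov_bound by blast
  define e where "e = min \<epsilon> \<epsilon>0"
  have e: "0 < e" "e \<le> \<epsilon>" "e \<le> \<epsilon>0" using \<epsilon> eps0_pos by (auto simp: e_def)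
  define nonint where "nonint \<alpha> \<longleftrightarrow> (\<forall>m n k. 1 \<le> m \<longrightarrow> 1 \<le> n \<longrightarrow> m \<noteq> n \<longrightarrow> \<alpha>*(x m - x n) \<noteq> of_int k)" for \<alpha> :: real
  define P where "P A \<alpha> \<longleftrightarrow> (\<bar>\<alpha>\<bar> \<le> A \<longrightarrow> 1/A \<le> \<bar>\<alpha>\<bar> \<longrightarrow> nonint \<alpha> \<longrightarrow>
     (\<exists>C>0. \<forall>N\<ge>2. C/(real N * ln (real N) powr (1+\<epsilon>)) \<le> delta_min x \<alpha> N))" for A \<alpha> :: real
  have "\<forall>a::nat. AE \<alpha> in lborel. P (real (Suc a)) \<alpha>"
  proof
    fix a :: nat
    show "AE \<alpha> in lborel. P (real (Suc a)) \<alpha>"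
      using core[of "real (Suc a)" e \<epsilon> \<epsilon>0 g0 x Cc] e g0 sepx Cc covb
      unfolding P_def nonint_def by simp
  qed
  then have AE1: "AE \<alpha> in lborel. \<forall>a::nat. P (real (Suc a)) \<alpha>" by (subst AE_all_countable)
  have AE2: "AE \<alpha> in lborel. nonint \<alpha>"
  proof (rule AE_I')
    let ?N = "(\<lambda>((m,n),k). real_of_int k / (x m - x n)) ` (UNIV :: ((nat \<times> nat) \<times> int) set)"
    show "?N \<in> null_sets lborel" by (rule countable_imp_null_set_lborel) simp
    show "{\<alpha> \<in> space lborel. \<not> nonint \<alpha>} \<subseteq> ?N"
    proof
      fix \<alpha> assume "\<alpha> \<in> {\<alpha> \<in> space lborel. \<not> nonint \<alpha>}"
      then obtain m n k where mn: "1 \<le> m" "1 \<le> n" "m \<noteq> n" and k: "\<alpha>*(x m - x n) = of_int k"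
        unfolding nonint_def by auto
      have "x m \<noteq> x n" using inj_onD[OF distinct, of m n] mn by auto
      then have "\<alpha> = real_of_int k / (x m - x n)" using k by (simp add: field_simps)
      then show "\<alpha> \<in> ?N" by (intro image_eqI[of _ _ "((m,n),k)"]) auto
    qed
  qed
  show "AE \<alpha> in lborel. \<exists>C>0. \<forall>N\<ge>2. delta_min x \<alpha> N \<ge> C / (real N * ln (real N) powr (1 + \<epsilon>))"
    using AE1 AE2
  proof eventually_elim
    case (elim \<alpha>)
    have "\<alpha> \<noteq> 0"
    proof
      assume "\<alpha> = 0"
      then have "\<alpha> * (x 1 - x 2) = of_int 0" by simp
      moreover have "(1::nat) \<le> 1" "(1::nat) \<le> 2" "(1::nat) \<noteq> 2" by auto
      ultimately show False using elim(2) unfolding nonint_def by blast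
    qed
    then have ap: "\<bar>\<alpha>\<bar> > 0" by simp
    define a where "a = nat \<lceil>max \<bar>\<alpha>\<bar> (1/\<bar>\<alpha>\<bar>)\<rceil>"
    have ge: "real (Suc a) \<ge> max \<bar>\<alpha>\<bar> (1/\<bar>\<alpha>\<bar>)" unfolding a_def by linarith
    then have h1: "\<bar>\<alpha>\<bar> \<le> real (Suc a)" by simp
    have "1/\<bar>\<alpha>\<bar> \<le> real (Suc a)" using ge by simp
    then have h2: "1/real (Suc a) \<le> \<bar>\<alpha>\<bar>" using ap by (simp add: field_simps)
    from elim(1) have "P (real (Suc a)) \<alpha>" by blast
    then show ?case using h1 h2 elim(2) unfolding P_def by auto
  qed
qed

end
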